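(* Let $k\geq 2$ and $\ell\geq 3$ be fixed integers. Let $p\geq\frac{\log n}{\sqrt n}$ and $G\in\mathcal{G}_{k,n,p}$, and let $X=X_0,X_1,\dots$ be a simple random walk on $G$ starting at $w\in V(G)$. Then for all $x\in V(G)$, \[ \mathbb{P}_w[X_2=x]=\begin{cases}\frac1n\pm\mathcal{O}\!\left(\frac{\sqrt{\log n}}{pn^{3/2}}\right)&\text{if }x\neq w,\\[2pt] \frac{1}{pn}\pm\mathcal{O}\!\left(\frac{\sqrt{\log n}}{p^{3/2}n^{3/2}}\right)&\text{if }x=w,\end{cases} \] and \[ \mathbb{P}_w[X_\ell=x]=\frac1n\pm\mathcal{O}\!\left(\frac{\sqrt{\log n}}{pn^{3/2}}\right). \]
   Context: For $p=p(n)$ with $\frac{\log n}{n^{(k-1)/k}}\le p\le 1-\Omega(\frac{\log^4 n}{n})$, $\mathcal{G}_{k,n,p}$ denotes the set of graphs $G$ on $n$ vertices satisfying: (i) $G$ is not bipartite; (ii) $\operatorname{diam}(G)\le k$; (iii) every vertex has degree $d(v)=pn\pm\mathcal{O}(\sqrt{pn\log n})$; (iv) $2|E(G)|=pn^2\pm\mathcal{O}(\sqrt{pn^2\log n})$; (v) $|N(v)\cap N(w)|=p^2n\pm\mathcal{O}(\max\{\sqrt{p^2n\log n},\log n\})$ for all $v\ne w$; (vi) the unit eigenvector $\phi$ of the largest adjacency eigenvalue has entries $\phi_i=\frac1{\sqrt n}\pm\mathcal{O}(\frac{\log^{3/2}n}{\sqrt p\,n\log(pn)})$; (vii) $\lambda_1=(1+o(1))pn$;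 (viii) $\max\{|\lambda_2|,|\lambda_n|\}=\mathcal{O}(\sqrt{pn})$, where $\lambda_1\ge\dots\ge\lambda_n$ are the adjacency eigenvalues. Asymptotic notation is as $n\to\infty$ with constants independent of $n$. $\mathbb{P}_w[\cdot]=\mathbb{P}[\cdot\mid X_0=w]$. *)

theory Defs
  imports Complex_Main "Jordan_Normal_Form.Char_Poly"
begin

definition simple_graph :: "nat \<Rightarrow> (nat \<Rightarrow> nat \<Rightarrow> bool) \<Rightarrow> bool" where
  "simple_graph n E \<longleftrightarrow> (\<forall>u v. E u v \<longrightarrow> u < n \<and> v < n \<and> u \<noteq> v \<and> E v u)"

definition bipartite :: "nat \<Rightarrow> (nat \<Rightarrow> nat \<Rightarrow> bool) \<Rightarrow> bool" where
  "bipartite n E \<longleftrightarrow> (\<exists>S. \<forall>u<n. \<forall>v<n. E u v \<longrightarrow> (u \<in> S \<longleftrightarrow> v \<notin> S))"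

text \<open>A walk of length t = length xs - 1 from u to v.\<close>
definition is_walk :: "nat \<Rightarrow> (nat \<Rightarrow> nat \<Rightarrow> bool) \<Rightarrow> nat list \<Rightarrow> bool" where
  "is_walk n E xs \<longleftrightarrow> xs \<noteq> [] \<and> set xs \<subseteq> {..<n} \<and>
     (\<forall>i. Suc i < length xs \<longrightarrow> E (xs ! i) (xs ! Suc i))"

definition diam_le :: "nat \<Rightarrow> (nat \<Rightarrow> nat \<Rightarrow> bool) \<Rightarrow> nat \<Rightarrow> bool" where
  "diam_le n E k \<longleftrightarrow> (\<forall>u<n. \<forall>v<n. \<exists>xs. is_walk n E xs \<and> hd xs = u \<and> last xs = v
      \<and> length xs \<le> Suc k)"

definition degree :: "nat \<Rightarrow> (nat \<Rightarrow> nat \<Rightarrow> bool) \<Rightarrow> nat \<Rightarrow> nat" where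
  "degree n E v = card {u. u < n \<and> E v u}"

definition codegree :: "nat \<Rightarrow> (nat \<Rightarrow> nat \<Rightarrow> bool) \<Rightarrow> nat \<Rightarrow> nat \<Rightarrow> nat" where
  "codegree n E v w = card {u. u < n \<and> E v u \<and> E w u}"

text \<open>2|E(G)| = number of ordered adjacent pairs.\<close>
definition num_edges :: "nat \<Rightarrow> (nat \<Rightarrow> nat \<Rightarrow> bool) \<Rightarrow> nat" where
  "num_edges n E = card {(u, v). u < n \<and> v < n \<and> E u v} div 2"

definition adj_mat :: "nat \<Rightarrow> (nat \<Rightarrow> nat \<Rightarrow> bool) \<Rightarrow> real mat" where
  "adj_mat n E = mat n n (\<lambda>(i, j). if E i j then 1 else 0)"

text \<open>lam is the list of adjacency eigenvalues lambda_1 >= ... >= lambda_n,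
  counted with multiplicity (i.e. the roots of the characteristic polynomial).\<close>
definition adj_eigenvalues :: "nat \<Rightarrow> (nat \<Rightarrow> nat \<Rightarrow> bool) \<Rightarrow> real list \<Rightarrow> bool" where
  "adj_eigenvalues n E lam \<longleftrightarrow> length lam = n \<and> sorted (rev lam) \<and>
     char_poly (adj_mat n E) = (\<Prod>a\<leftarrow>lam. [:- a, 1:])"

text \<open>Distribution of a simple random walk: walk_prob n E w t x = P_w[X_t = x].\<close>
fun walk_prob :: "nat \<Rightarrow> (nat \<Rightarrow> nat \<Rightarrow> bool) \<Rightarrow> nat \<Rightarrow> nat \<Rightarrow> nat \<Rightarrow> real" where
  "walk_prob n E w 0 x = (if x = w then 1 else 0)"
| "walk_prob n E w (Suc t) x =
     (\<Sum>y<n. walk_prob n E w t y * (if E y x then 1 / real (degree n E y) else 0))"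

text \<open>The implicit constants are made explicit:
  C bounds all the O(.)-constants, c > 0 is the Omega-constant in the upper bound on p,
  and eps is the o(1)-function in (vii) (eps tends to 0).\<close>
definition in_G :: "real \<Rightarrow> real \<Rightarrow> (nat \<Rightarrow> real) \<Rightarrow> nat \<Rightarrow> nat \<Rightarrow> real \<Rightarrow>
    (nat \<Rightarrow> nat \<Rightarrow> bool) \<Rightarrow> bool" where
  "in_G C c eps k n p E \<longleftrightarrow>
     ln (real n) / real n powr ((real k - 1) / real k) \<le> p \<and>
     p \<le> 1 - c * ln (real n) ^ 4 / real n \<and>
     simple_graph n E \<and>
     \<not> bipartite n E \<and>
     diam_le n E k \<and>
     (\<forall>v<n. \<bar>real (degree n E v) - p * n\<bar> \<le> C * sqrt (p * n * ln n)) \<and>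
     \<bar>2 * real (num_edges n E) - p * n^2\<bar> \<le> C * sqrt (p * n^2 * ln n) \<and>
     (\<forall>v<n. \<forall>w<n. v \<noteq> w \<longrightarrow>
        \<bar>real (codegree n E v w) - p^2 * n\<bar> \<le> C * max (sqrt (p^2 * n * ln n)) (ln n)) \<and>
     (\<exists>lam. adj_eigenvalues n E lam \<and>
        (\<exists>\<phi> :: real vec. dim_vec \<phi> = n \<and> adj_mat n E *\<^sub>v \<phi> = lam ! 0 \<cdot>\<^sub>v \<phi> \<and>
           (\<Sum>i<n. (\<phi> $ i)^2) = 1 \<and>
           (\<forall>i<n. \<bar>\<phi> $ i - 1 / sqrt n\<bar> \<le>
               C * ln n powr (3/2) / (sqrt p * n * ln (p * n)))) \<and>
        \<bar>lam ! 0 - p * n\<bar> \<le> eps n * (p * n) \<and>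
        max \<bar>lam ! 1\<bar> \<bar>lam ! (n - 1)\<bar> \<le> C * sqrt (p * n))"

end

theory Submission
  imports Defs
begin

lemma wp_nonneg: "walk_prob n E w t x \<ge> 0"
  by (induction t arbitrary: x) (auto intro!: sum_nonneg mult_nonneg_nonneg)

lemma row_sum:
  assumes "simple_graph n E" "degree n E y > 0"
  shows "(\<Sum>x<n. if E y x then 1 / real (degree n E y) else 0) = 1"
proof -
  have "(\<Sum>x<n. if E y x then 1 / real (degree n E y) else 0)
      = (\<Sum>x\<in>{x \<in> {..<n}. E y x}. 1 / real (degree n E y))"
    by (rule sum.inter_filter[symmetric]) simp
  also have "{x \<in> {..<n}. E y x} = {u. u < n \<and> E y u}" by auto
  also have "(\<Sum>x\<in>{u. u < n \<and> E y u}. 1 / real (degree n E y)) = real (degree n E y) * (1 / real (degree n E y))"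
    unfolding sum_constant degree_def ..
  finally show ?thesis using assms(2) by simp
qed

lemma wp_sum1:
  assumes "simple_graph n E" "\<forall>v<n. degree n E v > 0" "w < n"
  shows "(\<Sum>x<n. walk_prob n E w t x) = 1"
proof (induction t)
  case 0
  then show ?case using assms(3) by simp
next
  case (Suc t)
  have "(\<Sum>x<n. walk_prob n E w (Suc t) x)
     = (\<Sum>x<n. \<Sum>y<n. walk_prob n E w t y * (if E y x then 1 / real (degree n E y) else 0))"
    by simp
  also have "\<dots> = (\<Sum>y<n. \<Sum>x<n. walk_prob n E w t y * (if E y x then 1 / real (degree n E y) else 0))"
    by (rule sum.swap)
  also have "\<dots> = (\<Sum>y<n. walk_prob n E w t y * (\<Sum>x<n. (if E y x then 1 / real (degree n E y) else 0)))"
    by (simp add: sum_distrib_left)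
  also have "\<dots> = (\<Sum>y<n. walk_prob n E w t y)"
    using row_sum[OF assms(1)] assms(2) by simp
  finally show ?case using Suc by simp
qed

lemma delta_sum: "(y::nat) < n \<Longrightarrow> (\<Sum>u<n. (if u = y then 1 else 0) * (f u::real)) = f y"
proof -
  assume y: "y < n"
  have "(\<Sum>u<n. (if u = y then 1 else 0) * f u) = (\<Sum>u<n. if u = y then f u else 0)"
    by (rule sum.cong) auto
  also have "\<dots> = (if y \<in> {..<n} then f y else 0)" by (rule sum.delta) simp
  finally show ?thesis using y by simp
qed

lemma wp_step1:
  assumes "y < n"
  shows "walk_prob n E y 1 z = (if E y z then 1 / real (degree n E y) else 0)"
proof -
  have "walk_prob n E y 1 z = (\<Sum>u<n. (if u = y then 1 else 0) * (if E u z then 1 / real (degree n E u) else 0))"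
    by simp
  also have "\<dots> = (if E y z then 1 / real (degree n E y) else 0)"
    by (rule delta_sum[OF assms])
  finally show ?thesis .
qed

lemma wp_step2:
  assumes "y < n"
  shows "walk_prob n E y 2 x = (\<Sum>z<n. (if E y z then 1 / real (degree n E y) else 0) *
            (if E z x then 1 / real (degree n E z) else 0))"
proof -
  have "walk_prob n E y 2 x = (\<Sum>z<n. walk_prob n E y 1 z * (if E z x then 1 / real (degree n E z) else 0))"
    by (simp add: numeral_2_eq_2)
  then show ?thesis using wp_step1[OF assms] by simp
qed

lemma wp_chap:
  "walk_prob n E w (Suc (Suc t)) x = (\<Sum>y<n. walk_prob n E w t y * walk_prob n E y 2 x)"
proof -
  have "walk_prob n E w (Suc (Suc t)) x =
     (\<Sum>z<n. (\<Sum>y<n. walk_prob n E w t y * (if E y z then 1 / real (degree n E y) else 0))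
        * (if E z x then 1 / real (degree n E z) else 0))" by simp
  also have "\<dots> = (\<Sum>z<n. \<Sum>y<n. walk_prob n E w t y * ((if E y z then 1 / real (degree n E y) else 0)
        * (if E z x then 1 / real (degree n E z) else 0)))"
    by (simp add: sum_distrib_right mult.assoc)
  also have "\<dots> = (\<Sum>y<n. \<Sum>z<n. walk_prob n E w t y * ((if E y z then 1 / real (degree n E y) else 0)
        * (if E z x then 1 / real (degree n E z) else 0)))"
    by (rule sum.swap)
  also have "\<dots> = (\<Sum>y<n. walk_prob n E w t y * walk_prob n E y 2 x)"
    by (rule sum.cong) (auto simp: wp_step2 sum_distrib_left)
  finally show ?thesis .
qed

lemma wp_upper:
  assumes "simple_graph n E" "\<forall>v<n. real (degree n E v) \<ge> m" "m > 0" "w < n"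
  shows "walk_prob n E w (Suc t) x \<le> 1 / m"
proof -
  have pos: "\<forall>v<n. degree n E v > 0" using assms(2,3)
    by (metis of_nat_0_less_iff order_less_le_trans)
  have "walk_prob n E w (Suc t) x
     = (\<Sum>y<n. walk_prob n E w t y * (if E y x then 1 / real (degree n E y) else 0))" by simp
  also have "\<dots> \<le> (\<Sum>y<n. walk_prob n E w t y * (1 / m))"
  proof (rule sum_mono)
    fix y assume y: "y \<in> {..<n}"
    have "(if E y x then 1 / real (degree n E y) else 0) \<le> 1 / m"
      using assms(2,3) y by (auto intro!: divide_left_mono)
    then show "walk_prob n E w t y * (if E y x then 1 / real (degree n E y) else 0)
        \<le> walk_prob n E w t y * (1 / m)"
      by (rule mult_left_mono) (rule wp_nonneg)
  qed
  also have "\<dots> = (\<Sum>y<n. walk_prob n E w t y) * (1 / m)"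
    by (rule sum_distrib_right[symmetric])
  also have "\<dots> = 1 / m" using wp_sum1[OF assms(1) pos assms(4)] by simp
  finally show ?thesis .
qed

lemma wp2_formula:
  assumes "simple_graph n E" "w < n"
  shows "walk_prob n E w 2 x = (1 / real (degree n E w)) *
      (\<Sum>z\<in>{z. z < n \<and> E w z \<and> E z x}. 1 / real (degree n E z))"
proof -
  have "walk_prob n E w 2 x = (\<Sum>z<n. (if E w z \<and> E z x then
        (1 / real (degree n E w)) * (1 / real (degree n E z)) else 0))"
    unfolding wp_step2[OF assms(2)] by (rule sum.cong) auto
  also have "\<dots> = (\<Sum>z\<in>{z \<in> {..<n}. E w z \<and> E z x}. (1 / real (degree n E w)) * (1 / real (degree n E z)))"
    by (rule sum.inter_filter[symmetric]) simp
  also have "\<dots> = (1 / real (degree n E w)) * (\<Sum>z\<in>{z \<in> {..<n}. E w z \<and> E z x}. 1 / real (degree n E z))"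
    by (rule sum_distrib_left[symmetric])
  also have "{z \<in> {..<n}. E w z \<and> E z x} = {z. z < n \<and> E w z \<and> E z x}" by auto
  finally show ?thesis .
qed

lemma set_same:
  assumes "simple_graph n E"
  shows "{z. z < n \<and> E w z \<and> E z w} = {u. u < n \<and> E w u}"
  using assms unfolding simple_graph_def by blast

lemma set_diff:
  assumes "simple_graph n E"
  shows "{z. z < n \<and> E w z \<and> E z x} = {u. u < n \<and> E w u \<and> E x u}"
  using assms unfolding simple_graph_def by blast

lemma sum_approx:
  fixes f :: "'a \<Rightarrow> real"
  assumes "finite S" "\<forall>y\<in>S. \<bar>f y - c\<bar> \<le> e"
  shows "\<bar>sum f S - real (card S) * c\<bar> \<le> real (card S) * e"
proof -
  have "\<bar>sum f S - real (card S) * c\<bar> = \<bar>\<Sum>y\<in>S. (f y - c)\<bar>"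
    by (simp add: sum_subtractf)
  also have "\<dots> \<le> (\<Sum>y\<in>S. \<bar>f y - c\<bar>)" by (rule sum_abs)
  also have "\<dots> \<le> (\<Sum>y\<in>S. e)" using assms(2) by (intro sum_mono) auto
  finally show ?thesis by simp
qed

lemma arith_same:
  fixes d S q e :: real
  assumes "d > 0" "\<bar>S - d / q\<bar> \<le> d * e"
  shows "\<bar>(1/d) * S - 1/q\<bar> \<le> e"
proof -
  have "(1/d) * S - 1/q = (S - d/q) / d" using assms(1) by (simp add: field_simps)
  then have "\<bar>(1/d) * S - 1/q\<bar> = \<bar>S - d/q\<bar> / d" using assms(1) by simp
  also have "\<dots> \<le> d * e / d" using assms by (intro divide_right_mono) auto
  finally show ?thesis using assms(1) by simp
qed

lemma inv_approx:
  fixes d q e :: real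
  assumes "q > 0" "0 \<le> e" "e \<le> q/2" "\<bar>d - q\<bar> \<le> e"
  shows "\<bar>1/d - 1/q\<bar> \<le> 2*e/q^2"
proof -
  have d: "d \<ge> q/2" using assms by linarith
  then have dp: "d > 0" using assms(1) by linarith
  have "1/d - 1/q = (q - d)/(d*q)" using dp assms(1) by (simp add: field_simps)
  then have "\<bar>1/d - 1/q\<bar> = \<bar>d - q\<bar>/(d*q)" using dp assms(1) by (simp add: abs_minus_commute)
  also have "\<dots> \<le> e / (d*q)" using assms dp by (intro divide_right_mono) auto
  also have "\<dots> \<le> e / ((q/2)*q)" using assms d dp
    by (intro divide_left_mono mult_right_mono mult_pos_pos) auto
  also have "\<dots> = 2*e/q^2" by (simp add: power2_eq_square)
  finally show ?thesis .
qed

lemma arith_xw: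
  fixes a b r C d s S :: real
  assumes a: "a > 0" and b: "b \<ge> 1" and r: "r > 0" "r \<le> 1" and C: "C \<ge> 0"
    and h1: "b^2 \<le> r^2*a" and h2: "2*C*b \<le> r*a"
    and hd: "\<bar>d - r^2*a^2\<bar> \<le> C*(r*a*b)" and hs0: "0 \<le> s"
    and hs: "\<bar>s - r^4*a^2\<bar> \<le> C*(r^2*a*b)"
    and hS: "\<bar>S - s*(1/(r^2*a^2))\<bar> \<le> s*(2*(C*(r*a*b))/(r^2*a^2)^2)"
  shows "\<bar>(1/d)*S - 1/a^2\<bar> \<le> (8*C+4*C^2)*b/(r^2*a^3)"
proof -
  define q where "q = r^2*a^2"
  have qp: "q > 0" using a r by (simp add: q_def)
  have del: "C*(r*a*b) \<le> q/2"
  proof -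
    have "C*(r*a*b) = (r*a)*(C*b)" by (simp add: algebra_simps)
    also have "\<dots> \<le> (r*a)*(r*a/2)" using h2 a r by (intro mult_left_mono) auto
    then show ?thesis unfolding q_def by (simp add: power2_eq_square algebra_simps)
  qed
  have dq: "d \<ge> q/2" using hd del unfolding q_def by linarith
  have dp: "d > 0" using dq qp by linarith
  have bb0: "b \<le> b*b" using mult_left_mono[of 1 b b] b by simp
  have h1': "b*b \<le> r*r*a" using h1 by (simp add: power2_eq_square)
  have bb: "b \<le> r^2*a" using bb0 h1' by (simp add: power2_eq_square)
  have sle: "s \<le> (1+C)*(r^4*a^2)"
  proof -
    have "C*(r^2*a*b) \<le> C*(r^2*a*(r^2*a))" using bb C a r by (intro mult_left_mono) auto
    then show ?thesis using hs by (simp add: algebra_simps power2_eq_square power4_eq_xxxx) 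
  qed
  have T1: "\<bar>S - s/q\<bar> / d \<le> 4*C*(1+C)*b/(r^2*a^3)"
  proof -
    have e0: "0 \<le> 2*(C*(r*a*b))/q^2" using C a b r by simp
    have "\<bar>S - s/q\<bar> / d \<le> (s*(2*(C*(r*a*b))/q^2))/d"
      using hS dp unfolding q_def by (intro divide_right_mono) auto
    also have "\<dots> \<le> ((1+C)*(r^4*a^2)*(2*(C*(r*a*b))/q^2))/(q/2)"
      using sle e0 hs0 dq qp C by (intro frac_le mult_right_mono mult_nonneg_nonneg) auto
    also have "\<dots> = 4*C*(1+C)*b/(r*a^3)"
      using a r unfolding q_def by (simp add: field_simps power2_eq_square power3_eq_cube power4_eq_xxxx)
    also have "\<dots> \<le> 4*C*(1+C)*b/(r^2*a^3)"
    proof (rule divide_left_mono)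
      show "0 \<le> 4*C*(1+C)*b" using C b by simp
      show "r^2*a^3 \<le> r*a^3" using r a by (simp add: power2_eq_square mult_left_le_one_le mult_right_le_one_le)
      show "0 < r*a^3 * (r^2*a^3)" using r a by simp
    qed
    finally show ?thesis .
  qed
  have T2: "\<bar>s/(q*d) - 1/a^2\<bar> \<le> 4*C*b/(r^2*a^3)"
  proof -
    have eq: "s*a^2 - q*d = (s - r^4*a^2)*a^2 - q*(d - q)" unfolding q_def
      by (simp add: algebra_simps power2_eq_square power4_eq_xxxx)
    have "\<bar>s*a^2 - q*d\<bar> \<le> \<bar>s - r^4*a^2\<bar>*a^2 + q*\<bar>d - q\<bar>"
      unfolding eq using qp abs_triangle_ineq4[of "(s - r^4*a^2)*a^2" "q*(d - q)"] by (simp add: abs_mult)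
    also have "\<dots> \<le> C*(r^2*a*b)*a^2 + q*(C*(r*a*b))"
      using hs hd qp unfolding q_def by (intro add_mono mult_left_mono mult_right_mono) auto
    finally have num: "\<bar>s*a^2 - q*d\<bar> \<le> C*(r^2*a*b)*a^2 + q*(C*(r*a*b))" .
    have "s/(q*d) - 1/a^2 = (s*a^2 - q*d)/(q*d*a^2)" using qp dp a by (simp add: field_simps)
    then have "\<bar>s/(q*d) - 1/a^2\<bar> = \<bar>s*a^2 - q*d\<bar>/(q*d*a^2)" using qp dp a by simp
    also have "\<dots> \<le> (C*(r^2*a*b)*a^2 + q*(C*(r*a*b)))/(q*(q/2)*a^2)"
      using num qp dp dq a C b r by (intro frac_le mult_right_mono mult_left_mono) auto
    also have "\<dots> = 2*C*b*(1+r)/(r^2*a^3)"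
      using a r unfolding q_def by (simp add: field_simps power2_eq_square power3_eq_cube power4_eq_xxxx)
    also have "\<dots> \<le> 4*C*b/(r^2*a^3)"
      using r a C b mult_left_mono[of "1+r" 2 "2*C*b"] by (intro divide_right_mono) auto
    finally show ?thesis .
  qed
  have e: "(1/d)*S - 1/a^2 = (S - s/q)/d + (s/(q*d) - 1/a^2)" using dp qp by (simp add: field_simps)
  have e1: "\<bar>(1/d)*S - 1/a^2\<bar> = \<bar>(S - s/q)/d + (s/(q*d) - 1/a^2)\<bar>" using e by simp
  have e2: "\<bar>(S - s/q)/d\<bar> = \<bar>S - s/q\<bar>/d" using dp by simp
  have "\<bar>(1/d)*S - 1/a^2\<bar> \<le> \<bar>S - s/q\<bar> / d + \<bar>s/(q*d) - 1/a^2\<bar>"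
    using e1 e2 abs_triangle_ineq[of "(S - s/q)/d" "s/(q*d) - 1/a^2"] by linarith
  also have "\<dots> \<le> 4*C*(1+C)*b/(r^2*a^3) + 4*C*b/(r^2*a^3)" using T1 T2 by linarith
  also have "\<dots> = (8*C+4*C^2)*b/(r^2*a^3)"
    by (simp only: add_divide_distrib[symmetric]) (simp add: algebra_simps power2_eq_square)
  finally show ?thesis .
qed

lemma powr32: "(x::real) \<ge> 0 \<Longrightarrow> x powr (3/2) = sqrt x ^ 3"
proof -
  assume x: "x \<ge> 0"
  have "x powr (3/2) = sqrt (x powr 3)" using powr_half_sqrt_powr[OF x, of 3] by simp
  also have "x powr 3 = x ^ 3"
  proof (cases "x = 0")
    case True then show ?thesis by simp
  next
    case False then have "x > 0" using x by simp
    then show ?thesis using powr_realpow[of x 3] by simp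
  qed
  finally show ?thesis by (simp add: real_sqrt_power)
qed

lemma half_bound:
  fixes a b r C :: real
  assumes "2*C*b \<le> r*a" "r > 0" "a > 0"
  shows "C*(r*a*b) \<le> (r^2*a^2)/2"
proof -
  have "C*(r*a*b) = (r*a)*(C*b)" by (simp add: algebra_simps)
  also have "\<dots> \<le> (r*a)*(r*a/2)" using assms by (intro mult_left_mono) auto
  finally show ?thesis by (simp add: power2_eq_square algebra_simps)
qed

lemma arith_fin:
  fixes a b r :: real
  assumes "r > 0" "a > 0" "1 \<le> b*(r^2*a)"
  shows "6/(r^2*a^2)^2 \<le> 6*b/(r^2*a^3)"
proof -
  have "6/(r^2*a^2)^2 = (6/(r^2*a^3)) * (1/(r^2*a))" by (simp add: power2_eq_square power3_eq_cube)
  also have "\<dots> \<le> (6/(r^2*a^3)) * b"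
  proof (rule mult_left_mono)
    show "1/(r^2*a) \<le> b" using assms by (simp add: divide_le_eq mult.commute)
    show "0 \<le> 6/(r^2*a^3)" using assms by simp
  qed
  finally show ?thesis by simp
qed

theorem lemma6p4:
  fixes k l :: nat and C c :: real and eps :: "nat \<Rightarrow> real"
  assumes "k \<ge> 2" and "l \<ge> 3" and "c > 0" and "eps \<longlonglongrightarrow> 0"
  shows "\<exists>D N. \<forall>n \<ge> N. \<forall>p E. \<forall>w<n. \<forall>x<n.
     ln (real n) / sqrt (real n) \<le> p \<longrightarrow> in_G C c eps k n p E \<longrightarrow>
       (x \<noteq> w \<longrightarrow> \<bar>walk_prob n E w 2 x - 1 / n\<bar> \<le> D * sqrt (ln n) / (p * n powr (3/2))) \<and>
       (x = w \<longrightarrow> \<bar>walk_prob n E w 2 x - 1 / (p * n)\<bar>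
                      \<le> D * sqrt (ln n) / (p powr (3/2) * n powr (3/2))) \<and>
       \<bar>walk_prob n E w l x - 1 / n\<bar> \<le> D * sqrt (ln n) / (p * n powr (3/2))"
proof -
  define D where "D = 6 + 8*\<bar>C\<bar> + 4*C^2"
  define N where "N = max 3 (nat \<lceil>16*C^4\<rceil>)"
  have main: "(x \<noteq> w \<longrightarrow> \<bar>walk_prob n E w 2 x - 1 / n\<bar> \<le> D * sqrt (ln n) / (p * n powr (3/2))) \<and>
       (x = w \<longrightarrow> \<bar>walk_prob n E w 2 x - 1 / (p * n)\<bar>
                      \<le> D * sqrt (ln n) / (p powr (3/2) * n powr (3/2))) \<and>
       \<bar>walk_prob n E w l x - 1 / n\<bar> \<le> D * sqrt (ln n) / (p * n powr (3/2))"
    if nN: "n \<ge> N" and wn: "w < n" and xn: "x < n" and pL: "ln (real n) / sqrt (real n) \<le> p"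
      and G: "in_G C c eps k n p E" for n p E w x
  proof -
    have sg: "simple_graph n E" and pup: "p \<le> 1 - c * ln (real n) ^ 4 / real n"
      and deg: "\<forall>v<n. \<bar>real (degree n E v) - p * n\<bar> \<le> C * sqrt (p * n * ln n)"
      and cod: "\<forall>v<n. \<forall>w<n. v \<noteq> w \<longrightarrow>
        \<bar>real (codegree n E v w) - p^2 * n\<bar> \<le> C * max (sqrt (p^2 * n * ln n)) (ln n)"
      using G unfolding in_G_def by auto
    have n3: "real n \<ge> 3" using nN unfolding N_def by simp
    have npos: "real n > 0" using n3 by simp
    have L1: "ln (real n) \<ge> 1"
      using ln_ge_iff[OF npos, of 1] exp_le n3 by linarith
    have lnpos: "0 < ln (real n)" using L1 by linarith
    define a where "a = sqrt (real n)"
    define b where "b = sqrt (ln (real n))"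
    define r where "r = sqrt p"
    have apos: "a > 0" using npos unfolding a_def by simp
    have a2: "a^2 = real n" using npos unfolding a_def by simp
    have b1: "b \<ge> 1" using L1 unfolding b_def by simp
    have b2: "b^2 = ln (real n)" using L1 unfolding b_def by simp
    have ppos: "p > 0"
    proof -
      have "0 < ln (real n) / sqrt (real n)" using L1 npos n3 by (intro divide_pos_pos) auto
      then show ?thesis using pL by linarith
    qed
    have r2: "r^2 = p" using ppos unfolding r_def by simp
    have rpos: "r > 0" using ppos unfolding r_def by simp
    have ple1: "p \<le> 1"
    proof -
      have "0 < c * ln (real n) ^ 4 / real n" using assms(3) L1 npos n3 by (intro divide_pos_pos mult_pos_pos zero_less_power) auto
      then show ?thesis using pup by linarith
    qed
    have rle1: "r \<le> 1" using ple1 unfolding r_def by simp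
    have Cnn: "C \<ge> 0"
    proof -
      have "0 \<le> C * sqrt (p * n * ln n)" using deg wn by (meson abs_ge_zero order_trans)
      moreover have "sqrt (p * n * ln n) > 0" using ppos npos lnpos by (intro real_sqrt_gt_zero mult_pos_pos) auto
      ultimately show ?thesis by (simp add: zero_le_mult_iff)
    qed
    have a4C: "a \<ge> 4*C^2"
    proof -
      have "16*C^4 \<le> real (nat \<lceil>16*C^4\<rceil>)" by (rule real_nat_ceiling_ge)
      also have "\<dots> \<le> real n"
      proof -
        have "nat \<lceil>16*C^4\<rceil> \<le> n" using nN unfolding N_def by simp
        then show ?thesis by (rule of_nat_mono)
      qed
      finally have "(4*C^2)^2 \<le> real n" by (simp add: power2_eq_square power4_eq_xxxx algebra_simps)
      then show ?thesis unfolding a_def by (rule real_le_rsqrt)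
    qed
    have h1: "b^2 \<le> r^2*a"
    proof -
      have "ln (real n) \<le> p * sqrt (real n)" using pL npos by (simp add: divide_le_eq)
      then show ?thesis using b2 r2 unfolding a_def by simp
    qed
    have h2: "2*C*b \<le> r*a"
    proof (rule power2_le_imp_le)
      show "0 \<le> r*a" using rpos apos by simp
      have "(2*C*b)^2 = (4*C^2)*b^2" by (simp add: power2_eq_square algebra_simps)
      also have "\<dots> \<le> a*b^2" using a4C by (intro mult_right_mono) auto
      also have "\<dots> \<le> a*(r^2*a)" using h1 apos by (intro mult_left_mono) auto
      also have "\<dots> = (r*a)^2" by (simp add: power2_eq_square algebra_simps)
      finally show "(2*C*b)^2 \<le> (r*a)^2" .
    qed
    define q where "q = r^2*a^2"
    have qpos: "q > 0" unfolding q_def using rpos apos by simp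
    have pn: "p * real n = q" unfolding q_def using r2 a2 by simp
    have sq1: "sqrt (p * n * ln n) = r*a*b" unfolding r_def a_def b_def by (simp add: real_sqrt_mult)
    have degb: "\<forall>v<n. \<bar>real (degree n E v) - q\<bar> \<le> C*(r*a*b)" using deg pn sq1 by simp
    have hb: "C*(r*a*b) \<le> q/2" unfolding q_def using half_bound[OF h2 rpos apos] .
    have e0: "0 \<le> C*(r*a*b)" using Cnn rpos apos b1 by simp
    have dge: "\<forall>v<n. real (degree n E v) \<ge> q/2"
    proof (intro allI impI)
      fix v assume "v < n"
      then have "\<bar>real (degree n E v) - q\<bar> \<le> C*(r*a*b)" using degb by blast
      then show "real (degree n E v) \<ge> q/2" using hb by (simp add: abs_le_iff)
    qed
    have inv: "\<forall>v<n. \<bar>1 / real (degree n E v) - 1/q\<bar> \<le> 2*(C*(r*a*b))/q^2"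
      using inv_approx[OF qpos e0 hb] degb by blast
    have rd: "\<forall>v<n. real (degree n E v) > 0"
    proof (intro allI impI)
      fix v assume "v < n"
      then have "real (degree n E v) \<ge> q/2" using dge by blast
      then show "real (degree n E v) > 0" using qpos by linarith
    qed
    have bb: "b \<le> r^2*a"
    proof -
      have "b \<le> b*b" using mult_left_mono[of 1 b b] b1 by simp
      then show ?thesis using h1 by (simp add: power2_eq_square)
    qed
    have pow_n: "real n powr (3/2) = a^3" unfolding a_def using powr32 npos by simp
    have pow_p: "p powr (3/2) = r^3" unfolding r_def using powr32 ppos by simp
    have sqL: "sqrt (ln (real n)) = b" unfolding b_def ..
    define E1 where "E1 = (8*C+4*C^2)*b/(r^2*a^3)"
    have two_diff: "\<bar>walk_prob n E w' 2 x - 1/n\<bar> \<le> E1" if w'n: "w' < n" and w'x: "w' \<noteq> x" for w'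
    proof -
      define Sset where "Sset = {z. z < n \<and> E w' z \<and> E z x}"
      have fin: "finite Sset" unfolding Sset_def by simp
      have cardS: "card Sset = codegree n E w' x"
        unfolding Sset_def codegree_def using set_diff[OF sg] by simp
      define s where "s = real (codegree n E w' x)"
      have s0: "0 \<le> s" unfolding s_def by simp
      have sumb: "\<bar>(\<Sum>z\<in>Sset. 1 / real (degree n E z)) - s * (1/q)\<bar> \<le> s * (2*(C*(r*a*b))/q^2)"
      proof -
        have "\<forall>y\<in>Sset. \<bar>1 / real (degree n E y) - 1/q\<bar> \<le> 2*(C*(r*a*b))/q^2"
          using inv unfolding Sset_def by auto
        from sum_approx[OF fin this] show ?thesis unfolding s_def cardS .
      qed
      have c1: "\<bar>s - p^2 * n\<bar> \<le> C * max (sqrt (p^2 * n * ln n)) (ln n)"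
        using cod w'n xn w'x unfolding s_def by auto
      have sq2: "sqrt (p^2 * n * ln n) = r^2*a*b"
        unfolding r_def a_def b_def using ppos by (simp add: real_sqrt_mult)
      have mx: "max (r^2*a*b) (b^2) = r^2*a*b"
      proof -
        have "b*b \<le> r^2*a*b" using bb b1 by (intro mult_right_mono) auto
        then show ?thesis by (simp add: power2_eq_square)
      qed
      have c2: "\<bar>s - r^4*a^2\<bar> \<le> C*(r^2*a*b)"
      proof -
        have "p^2 * real n = r^4*a^2" using r2 a2 by (simp add: power2_eq_square power4_eq_xxxx)
        then show ?thesis using c1 sq2 mx b2 by simp
      qed
      have dw: "\<bar>real (degree n E w') - r^2*a^2\<bar> \<le> C*(r*a*b)" using degb w'n unfolding q_def by simp
      have "\<bar>(1 / real (degree n E w')) * (\<Sum>z\<in>Sset. 1 / real (degree n E z)) - 1/a^2\<bar> \<le> E1"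
        unfolding E1_def
        by (rule arith_xw[OF apos b1 rpos rle1 Cnn h1 h2 dw s0 c2]) (use sumb in \<open>simp add: q_def\<close>)
      then show ?thesis using wp2_formula[OF sg w'n, of x] a2 unfolding Sset_def by simp
    qed
    have two_same: "\<bar>walk_prob n E w 2 w - 1/q\<bar> \<le> 2*(C*(r*a*b))/q^2"
    proof -
      define Sset where "Sset = {z. z < n \<and> E w z \<and> E z w}"
      have fin: "finite Sset" unfolding Sset_def by simp
      have cardS: "card Sset = degree n E w"
        unfolding Sset_def degree_def using set_same[OF sg] by simp
      have sumb: "\<bar>(\<Sum>z\<in>Sset. 1 / real (degree n E z)) - real (degree n E w) / q\<bar>
          \<le> real (degree n E w) * (2*(C*(r*a*b))/q^2)"
      proof -
        have "\<forall>y\<in>Sset. \<bar>1 / real (degree n E y) - 1/q\<bar> \<le> 2*(C*(r*a*b))/q^2"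
          using inv unfolding Sset_def by auto
        from sum_approx[OF fin this] show ?thesis unfolding cardS by simp
      qed
      have "\<bar>(1 / real (degree n E w)) * (\<Sum>z\<in>Sset. 1 / real (degree n E z)) - 1/q\<bar>
          \<le> 2*(C*(r*a*b))/q^2"
        by (rule arith_same) (use rd wn sumb in auto)
      then show ?thesis using wp2_formula[OF sg wn, of w] unfolding Sset_def by simp
    qed
    have E1nn: "0 \<le> E1" unfolding E1_def using Cnn b1 rpos apos by simp
    have upper: "walk_prob n E w' (Suc t) y \<le> 2/q" if "w' < n" for w' t y
      using wp_upper[OF sg dge _ that, of t y] qpos by simp
    have inv_n: "1 / real n \<le> 1/q"
    proof -
      have "q \<le> 1 * real n" unfolding pn[symmetric] using ple1 npos by (intro mult_right_mono) auto
      then show ?thesis using qpos by (intro divide_left_mono) auto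
    qed
    have self3: "\<bar>walk_prob n E x 2 x - 1/n\<bar> \<le> 3/q"
    proof -
      have "walk_prob n E x 2 x \<le> 2/q" using upper[OF xn, of 1 x] by (simp add: numeral_2_eq_2)
      moreover have "walk_prob n E x 2 x \<ge> 0" by (rule wp_nonneg)
      moreover have "1/real n > 0" using npos by simp
      moreover have "2/q + 1/q = 3/q" by (simp add: add_divide_distrib[symmetric])
      moreover have "0 < 1/q" using qpos by simp
      ultimately show ?thesis using inv_n by (intro abs_leI) linarith+
    qed
    have "l = Suc (Suc (Suc (l - 3)))" using assms(2) by simp
    then obtain t where lt: "l = Suc (Suc (Suc t))" by blast
    define P where "P = (\<lambda>y. walk_prob n E w (Suc t) y)"
    have Pnn: "\<And>y. P y \<ge> 0" unfolding P_def by (rule wp_nonneg)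
    have rdn: "\<forall>v<n. degree n E v > 0" using rd by simp
    have Psum: "(\<Sum>y<n. P y) = 1" unfolding P_def by (rule wp_sum1[OF sg rdn wn])
    have lstep: "\<bar>walk_prob n E w l x - 1/n\<bar> \<le> E1 + 6/q^2"
    proof -
      have "walk_prob n E w l x - 1/n = (\<Sum>y<n. P y * walk_prob n E y 2 x) - (\<Sum>y<n. P y) * (1/n)"
      proof -
        have "walk_prob n E w l x = (\<Sum>y<n. P y * walk_prob n E y 2 x)"
          unfolding lt P_def by (rule wp_chap)
        then show ?thesis using Psum by simp
      qed
      also have "\<dots> = (\<Sum>y<n. P y * (walk_prob n E y 2 x - 1/n))"
        by (simp add: sum_distrib_right sum_subtractf right_diff_distrib sum_divide_distrib)
      finally have "\<bar>walk_prob n E w l x - 1/n\<bar> = \<bar>\<Sum>y<n. P y * (walk_prob n E y 2 x - 1/n)\<bar>" by simp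
      also have "\<dots> \<le> (\<Sum>y<n. \<bar>P y * (walk_prob n E y 2 x - 1/n)\<bar>)" by (rule sum_abs)
      also have "\<dots> \<le> (\<Sum>y<n. P y * E1 + (if y = x then P y * (3/q) else 0))"
      proof (rule sum_mono)
        fix y assume y: "y \<in> {..<n}"
        have "\<bar>P y * (walk_prob n E y 2 x - 1/n)\<bar> = P y * \<bar>walk_prob n E y 2 x - 1/n\<bar>"
          using Pnn by (simp add: abs_mult)
        also have "\<dots> \<le> P y * E1 + (if y = x then P y * (3/q) else 0)"
        proof (cases "y = x")
          case True
          have A: "P x * \<bar>walk_prob n E x 2 x - 1/n\<bar> \<le> P x * (3/q)" by (rule mult_left_mono[OF self3 Pnn[of x]])
          have B: "0 \<le> P x * E1" by (rule mult_nonneg_nonneg[OF Pnn[of x] E1nn])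
          have "P x * \<bar>walk_prob n E x 2 x - 1/n\<bar> \<le> P x * E1 + P x * (3/q)" using A B by linarith
          then show ?thesis using True by simp
        next
          case False
          then show ?thesis using two_diff[of y] y mult_left_mono[OF two_diff[of y] Pnn[of y]] by simp
        qed
        finally show "\<bar>P y * (walk_prob n E y 2 x - 1/n)\<bar> \<le> P y * E1 + (if y = x then P y * (3/q) else 0)" .
      qed
      also have "\<dots> = (\<Sum>y<n. P y) * E1 + P x * (3/q)"
        using xn by (simp add: sum.distrib sum_distrib_right)
      also have "\<dots> \<le> E1 + (2/q) * (3/q)"
      proof -
        have Px: "P x \<le> 2/q" unfolding P_def by (rule upper[OF wn])
        have "P x * (3/q) \<le> (2/q)*(3/q)" using Px qpos by (intro mult_right_mono) auto
        then show ?thesis using Psum by simp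
      qed
      also have "\<dots> = E1 + 6/q^2" by (simp add: power2_eq_square)
      finally show ?thesis .
    qed
    have fin6: "6/q^2 \<le> 6*b/(r^2*a^3)"
    proof -
      have "1 \<le> b^2" using b1 by (simp add: one_le_power)
      also have "\<dots> \<le> r^2*a" by (rule h1)
      also have "\<dots> \<le> b*(r^2*a)" using b1 rpos apos mult_right_mono[of 1 b "r^2*a"] by simp
      finally show ?thesis unfolding q_def by (rule arith_fin[OF rpos apos])
    qed
    have Dge: "8*C+4*C^2 \<le> D" "2*C \<le> D" "8*C+4*C^2 + 6 \<le> D" unfolding D_def using Cnn by auto
    have tgt_eq: "D * sqrt (ln n) / (p * n powr (3/2)) = D*b/(r^2*a^3)"
      using sqL pow_n r2 by simp
    have tgt_eq2: "D * sqrt (ln n) / (p powr (3/2) * n powr (3/2)) = D*b/(r^3*a^3)"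
      using sqL pow_n pow_p by simp
    have pos_den: "0 < r^2*a^3" "0 < r^3*a^3" using rpos apos by auto
    have R1: "x \<noteq> w \<longrightarrow> \<bar>walk_prob n E w 2 x - 1 / n\<bar> \<le> D * sqrt (ln n) / (p * n powr (3/2))"
    proof
      assume "x \<noteq> w"
      then have "\<bar>walk_prob n E w 2 x - 1 / n\<bar> \<le> E1" using two_diff[OF wn] by auto
      also have "\<dots> \<le> D*b/(r^2*a^3)" unfolding E1_def
        using Dge b1 pos_den by (intro divide_right_mono mult_right_mono) auto
      finally show "\<bar>walk_prob n E w 2 x - 1 / n\<bar> \<le> D * sqrt (ln n) / (p * n powr (3/2))"
        using tgt_eq by simp
    qed
    have R2: "x = w \<longrightarrow> \<bar>walk_prob n E w 2 x - 1 / (p * n)\<bar>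
                      \<le> D * sqrt (ln n) / (p powr (3/2) * n powr (3/2))"
    proof
      assume xw: "x = w"
      have "2*(C*(r*a*b))/q^2 = (2*C)*b/(r^3*a^3)"
        unfolding q_def using rpos apos by (simp add: field_simps power2_eq_square power3_eq_cube)
      also have "\<dots> \<le> D*b/(r^3*a^3)"
        using Dge b1 pos_den by (intro divide_right_mono mult_right_mono) auto
      finally have "\<bar>walk_prob n E w 2 w - 1/q\<bar> \<le> D*b/(r^3*a^3)" using two_same by linarith
      then show "\<bar>walk_prob n E w 2 x - 1 / (p * n)\<bar> \<le> D * sqrt (ln n) / (p powr (3/2) * n powr (3/2))"
        using xw pn tgt_eq2 by simp
    qed
    have R3: "\<bar>walk_prob n E w l x - 1 / n\<bar> \<le> D * sqrt (ln n) / (p * n powr (3/2))"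
    proof -
      have "E1 + 6/q^2 \<le> (8*C+4*C^2)*b/(r^2*a^3) + 6*b/(r^2*a^3)" using fin6 unfolding E1_def by simp
      also have "\<dots> = (8*C+4*C^2 + 6)*b/(r^2*a^3)" by (simp add: add_divide_distrib[symmetric] algebra_simps)
      also have "\<dots> \<le> D*b/(r^2*a^3)"
        using Dge b1 pos_den by (intro divide_right_mono mult_right_mono) auto
      finally show ?thesis using lstep tgt_eq by simp
    qed
    show ?thesis using R1 R2 R3 by blast
  qed
  show ?thesis
    apply (rule exI[of _ D], rule exI[of _ N])
    using main by blast
qed

end
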